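(* Let $N=((V\cup \{s\}, A),\tau)$ be an acyclic temporal network (no arc enters $s$) and let $k\in \mathbb{N}$ be such that $$\min\{k,|\rho_N^i(v)|\}\ge \min\{k,|\delta_N^i(v)|\} \quad \text{for all } i\in \mathbb{N} \text{ and all } v\in V.$$ Then there exist $k$ pairwise arc-disjoint $\tau$-respecting $s$-arborescences $T_1,\dots,T_k$ in $D=(V\cup\{s\},A)$ such that each vertex $v\in V$ belongs to exactly $\min\{k,d^-_A(v)\}$ of them.
   Context: A temporal network is a pair $N=(D,\tau)$ where $D=(V\cup\{s\},A)$ is a directed graph (parallel arcs allowed) with a root $s$ that no arc enters, and $\tau:A\to\mathbb{N}$. $N$ is acyclic if $D$ has no directed cycle. $d^-_A(v)$ is the number of arcs entering $v$. For $i\in\mathbb{N}$, $\rho_N^i(v)=\{a \text{ entering } v:\tau(a)\le i\}$ and $\delta_N^i(v)=\{a\text{ leaving } v:\tau(a)\le i\}$. An $s$-arborescence is an acyclic subgraph $F=(V'\cup\{s\},A')$ with $V'\subseteq V$ in which every vertex of $V'$ has in-degree exactly $1$ (it need not span $V$). A directed path with arcs $a_1,\dots,a_\ell$ in order is $\tau$-respecting if $\tau(a_1)\le\tau(a_2)\le\dots\le\tau(a_\ell)$; an $s$-arborescence is $\tau$-respecting if for each of its vertices $v$ the unique $(s,v)$-path in it is $\tau$-respecting. *)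

theory Defs
  imports Main
begin

text \<open>A directed multigraph is given by a set of arcs A of an arbitrary type 'e
  together with tail and head maps; parallel arcs are distinct elements of A.\<close>

definition arc_rel :: "('e \<Rightarrow> 'v) \<Rightarrow> ('e \<Rightarrow> 'v) \<Rightarrow> 'e set \<Rightarrow> ('v \<times> 'v) set" where
  "arc_rel tail head A = {(tail a, head a) | a. a \<in> A}"

definition temporal_network ::
  "'v set \<Rightarrow> 'v \<Rightarrow> 'e set \<Rightarrow> ('e \<Rightarrow> 'v) \<Rightarrow> ('e \<Rightarrow> 'v) \<Rightarrow> bool" where
  "temporal_network V s A tail head \<longleftrightarrow>
     finite V \<and> finite A \<and> s \<notin> V \<and>
     (\<forall>a\<in>A. tail a \<in> V \<union> {s} \<and> head a \<in> V \<union> {s}) \<and>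
     (\<forall>a\<in>A. head a \<noteq> s)"

definition acyclic_arcs :: "('e \<Rightarrow> 'v) \<Rightarrow> ('e \<Rightarrow> 'v) \<Rightarrow> 'e set \<Rightarrow> bool" where
  "acyclic_arcs tail head A \<longleftrightarrow> acyclic (arc_rel tail head A)"

definition in_arcs :: "('e \<Rightarrow> 'v) \<Rightarrow> 'e set \<Rightarrow> 'v \<Rightarrow> 'e set" where
  "in_arcs head A v = {a \<in> A. head a = v}"

definition indeg :: "('e \<Rightarrow> 'v) \<Rightarrow> 'e set \<Rightarrow> 'v \<Rightarrow> nat" where
  "indeg head A v = card (in_arcs head A v)"

definition rho :: "('e \<Rightarrow> 'v) \<Rightarrow> ('e \<Rightarrow> nat) \<Rightarrow> 'e set \<Rightarrow> nat \<Rightarrow> 'v \<Rightarrow> 'e set" where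
  "rho head tau A i v = {a \<in> A. head a = v \<and> tau a \<le> i}"

definition delta :: "('e \<Rightarrow> 'v) \<Rightarrow> ('e \<Rightarrow> nat) \<Rightarrow> 'e set \<Rightarrow> nat \<Rightarrow> 'v \<Rightarrow> 'e set" where
  "delta tail tau A i v = {a \<in> A. tail a = v \<and> tau a \<le> i}"

definition is_path ::
  "('e \<Rightarrow> 'v) \<Rightarrow> ('e \<Rightarrow> 'v) \<Rightarrow> 'e set \<Rightarrow> 'v \<Rightarrow> 'v \<Rightarrow> 'e list \<Rightarrow> bool" where
  "is_path tail head B u v p \<longleftrightarrow>
     set p \<subseteq> B \<and>
     (p = [] \<longrightarrow> u = v) \<and>
     (p \<noteq> [] \<longrightarrow> tail (List.hd p) = u \<and> head (last p) = v) \<and>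
     (\<forall>j. Suc j < length p \<longrightarrow> head (p ! j) = tail (p ! Suc j)) \<and>
     distinct (u # map head p)"

definition tau_respecting_path :: "('e \<Rightarrow> nat) \<Rightarrow> 'e list \<Rightarrow> bool" where
  "tau_respecting_path tau p \<longleftrightarrow> sorted (map tau p)"

definition s_arborescence ::
  "'v set \<Rightarrow> 'v \<Rightarrow> 'e set \<Rightarrow> ('e \<Rightarrow> 'v) \<Rightarrow> ('e \<Rightarrow> 'v) \<Rightarrow> 'v set \<Rightarrow> 'e set \<Rightarrow> bool" where
  "s_arborescence V s A tail head V' B \<longleftrightarrow>
     V' \<subseteq> V \<and> B \<subseteq> A \<and>
     (\<forall>a\<in>B. tail a \<in> V' \<union> {s} \<and> head a \<in> V' \<union> {s}) \<and>
     acyclic_arcs tail head B \<and>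
     (\<forall>v\<in>V'. card (in_arcs head B v) = 1)"

definition tau_respecting_arborescence ::
  "'v set \<Rightarrow> 'v \<Rightarrow> 'e set \<Rightarrow> ('e \<Rightarrow> 'v) \<Rightarrow> ('e \<Rightarrow> 'v) \<Rightarrow> ('e \<Rightarrow> nat) \<Rightarrow> 'v set \<Rightarrow> 'e set \<Rightarrow> bool" where
  "tau_respecting_arborescence V s A tail head tau V' B \<longleftrightarrow>
     s_arborescence V s A tail head V' B \<and>
     (\<forall>v \<in> V' \<union> {s}. \<forall>p. is_path tail head B s v p \<longrightarrow> tau_respecting_path tau p)"

end

theory Submission
  imports Defs
begin


lemma matchA:
  fixes I :: "'e set" and J :: "nat set" and D :: "nat \<Rightarrow> nat" and tau :: "'e \<Rightarrow> nat"
  assumes "finite I" "finite J" "\<forall>i. card {j\<in>J. D j \<le> i} \<le> card {b\<in>I. tau b \<le> i}"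
  shows "\<exists>f. inj_on f J \<and> f ` J \<subseteq> I \<and> (\<forall>j\<in>J. tau (f j) \<le> D j)"
  using assms
proof (induction "card J" arbitrary: J I rule: less_induct)
  case less
  show ?case
  proof (cases "J = {}")
    case True then show ?thesis by auto
  next
    case False
    have "Min (D ` J) \<in> D ` J" using False less.prems(2) by simp
    then obtain j0 where j0: "j0 \<in> J" "D j0 = Min (D ` J)" by auto
    have j0min: "\<forall>j\<in>J. D j0 \<le> D j" using j0 less.prems(2) by simp
    have "1 \<le> card {j\<in>J. D j \<le> D j0}"
      proof -
      have "j0 \<in> {j\<in>J. D j \<le> D j0}" using j0(1) by simp
      moreover have "finite {j\<in>J. D j \<le> D j0}" using less.prems(2) by simp
      ultimately show ?thesis by (metis One_nat_def Suc_leI card_gt_0_iff empty_iff)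
    qed
    also have "\<dots> \<le> card {b\<in>I. tau b \<le> D j0}" using less.prems(3) by blast
    finally have "card {b\<in>I. tau b \<le> D j0} \<noteq> 0" by simp
    then have "{b\<in>I. tau b \<le> D j0} \<noteq> {}" by (metis card.empty)
    then obtain b1 where b1: "b1 \<in> I" "tau b1 \<le> D j0" by auto
    have "Min (tau ` I) \<in> tau ` I" using b1 less.prems(1) by (intro Min_in) auto
    then obtain b0 where b0: "b0 \<in> I" "tau b0 = Min (tau ` I)" by auto
    have b0le: "tau b0 \<le> D j0" using b0 b1 less.prems(1) by (metis Min_le finite_imageI image_eqI order.trans)
    define J' where "J' = J - {j0}"
    define I' where "I' = I - {b0}"
    have cJ: "card J' < card J" unfolding J'_def using j0(1) less.prems(2) by (meson card_Diff1_less)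
    have cond: "\<forall>i. card {j\<in>J'. D j \<le> i} \<le> card {b\<in>I'. tau b \<le> i}"
    proof
      fix i
      show "card {j\<in>J'. D j \<le> i} \<le> card {b\<in>I'. tau b \<le> i}"
      proof (cases "D j0 \<le> i")
        case True
        have e1: "{j\<in>J'. D j \<le> i} = {j\<in>J. D j \<le> i} - {j0}" unfolding J'_def by auto
        have e2: "{b\<in>I'. tau b \<le> i} = {b\<in>I. tau b \<le> i} - {b0}" unfolding I'_def by auto
        have f1: "finite {j\<in>J. D j \<le> i}" using less.prems(2) by auto
        have f2: "finite {b\<in>I. tau b \<le> i}" using less.prems(1) by auto
        have "card {j\<in>J'. D j \<le> i} = card {j\<in>J. D j \<le> i} - 1"
          unfolding e1 using j0(1) True by (simp add: card_Diff_singleton f1)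
        also have "\<dots> \<le> card {b\<in>I. tau b \<le> i} - 1" using less.prems(3) by (meson diff_le_mono)
        also have "\<dots> = card {b\<in>I'. tau b \<le> i}"
          unfolding e2 using b0(1) b0le True by (simp add: card_Diff_singleton f2)
        finally show ?thesis .
      next
        case False
        then have "{j\<in>J'. D j \<le> i} = {}" using j0min unfolding J'_def by force
        then show ?thesis by (metis card.empty le0)
      qed
    qed
    obtain f' where f': "inj_on f' J'" "f' ` J' \<subseteq> I'" "\<forall>j\<in>J'. tau (f' j) \<le> D j"
      proof -
      have "finite I'" "finite J'" using less.prems(1,2) unfolding J'_def I'_def by auto
      then show ?thesis using less.hyps[OF cJ _ _ cond] that by blast
    qed
    define f where "f = f'(j0 := b0)"
    have JJ: "J = insert j0 J'" using j0(1) unfolding J'_def by auto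
    have "inj_on f J"
    proof -
      have "inj_on f J'" using f'(1) unfolding f_def J'_def by (simp add: inj_on_def)
      moreover have "f j0 \<notin> f ` J'" using f'(2) unfolding f_def J'_def I'_def by auto
      moreover have "j0 \<notin> J'" unfolding J'_def by simp
      ultimately show ?thesis unfolding JJ by (simp add: inj_on_insert)
    qed
    moreover have "j0 \<notin> J'" unfolding J'_def by simp
    moreover have "I' \<subseteq> I" unfolding I'_def by auto
    ultimately have "f ` J \<subseteq> I" using f'(2) b0(1) unfolding f_def JJ by auto
    moreover have "\<forall>j\<in>J. tau (f j) \<le> D j" using f'(3) b0le \<open>j0 \<notin> J'\<close> unfolding f_def JJ by auto
    moreover note \<open>inj_on f J\<close>
    ultimately show ?thesis by blast
  qed
qed

lemma assignB:
  fixes I :: "'e set" and J :: "nat set" and D :: "nat \<Rightarrow> nat" and tau :: "'e \<Rightarrow> nat"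
  assumes fI: "finite I" and Jk: "J \<subseteq> {..<k}"
    and cond: "\<forall>i. card {j\<in>J. D j \<le> i} \<le> min k (card {b\<in>I. tau b \<le> i})"
  shows "\<exists>g::'e \<Rightarrow> nat option. (\<forall>b\<in>I. \<forall>j. g b = Some j \<longrightarrow> j < k) \<and>
     inj_on g {b\<in>I. g b \<noteq> None} \<and> card {b\<in>I. g b \<noteq> None} = min k (card I) \<and>
     (\<forall>j\<in>J. \<exists>b\<in>I. g b = Some j \<and> tau b \<le> D j)"
proof -
  have fJ: "finite J" using Jk finite_subset by blast
  obtain f where f: "inj_on f J" "f ` J \<subseteq> I" "\<forall>j\<in>J. tau (f j) \<le> D j"
    proof -
    have "\<forall>i. card {j\<in>J. D j \<le> i} \<le> card {b\<in>I. tau b \<le> i}"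
    proof
      fix i
      have "card {j\<in>J. D j \<le> i} \<le> min k (card {b\<in>I. tau b \<le> i})" using cond by blast
      then show "card {j\<in>J. D j \<le> i} \<le> card {b\<in>I. tau b \<le> i}" by simp
    qed
    then show ?thesis using matchA[OF fI fJ] that by blast
  qed
  define M where "M = f ` J"
  have cM: "card M = card J" unfolding M_def using f(1) by (simp add: card_image)
  define i0 where "i0 = Max (insert 0 (D ` J))"
  have "{j\<in>J. D j \<le> i0} = J" unfolding i0_def using fJ by auto
  moreover have "card {j\<in>J. D j \<le> i0} \<le> min k (card {b\<in>I. tau b \<le> i0})" using cond by blast
  ultimately have "card J \<le> min k (card {b\<in>I. tau b \<le> i0})" by simp
  also have "\<dots> \<le> min k (card I)" using fI by (intro min.mono) (auto intro: card_mono)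
  finally have cJ: "card J \<le> min k (card I)" .
  define n where "n = min k (card I) - card J"
  have "card (I - M) = card I - card J" using f(2) cM fI unfolding M_def by (simp add: card_Diff_subset finite_subset)
  then have "n \<le> card (I - M)" unfolding n_def by simp
  then obtain E where E: "E \<subseteq> I - M" "card E = n" "finite E" by (rule obtain_subset_with_card_n)
  have "card ({..<k} - J) = k - card J" using Jk fJ by (simp add: card_Diff_subset)
  then have "n \<le> card ({..<k} - J)" unfolding n_def by simp
  then obtain F where F: "F \<subseteq> {..<k} - J" "card F = n" "finite F" by (rule obtain_subset_with_card_n)
  obtain h where h: "bij_betw h E F" using finite_same_card_bij[OF E(3) F(3)] E(2) F(2) by auto
  define g where "g = (\<lambda>b. if b \<in> M then Some (inv_into J f b) else if b \<in> E then Some (h b) else None)"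
  have lab: "{b\<in>I. g b \<noteq> None} = M \<union> E" unfolding g_def M_def using f(2) E(1) by auto
  have MI: "M \<inter> E = {}" using E(1) by auto
  have fM: "finite M" unfolding M_def using fJ by simp
  have card: "card {b\<in>I. g b \<noteq> None} = min k (card I)"
    unfolding lab using card_Un_disjoint[OF fM E(3) MI] cM E(2) cJ n_def by simp
  have hE: "\<And>b. b \<in> E \<Longrightarrow> h b \<in> F" using h by (meson bij_betw_apply)
  have invJ: "\<And>b. b \<in> M \<Longrightarrow> inv_into J f b \<in> J" unfolding M_def by (simp add: inv_into_into)
  have gM: "\<And>b. b \<in> M \<Longrightarrow> g b = Some (inv_into J f b)" unfolding g_def by simp
  have gE: "\<And>b. b \<notin> M \<Longrightarrow> b \<in> E \<Longrightarrow> g b = Some (h b)" unfolding g_def by simp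
  have gN: "\<And>b. b \<notin> M \<Longrightarrow> b \<notin> E \<Longrightarrow> g b = None" unfolding g_def by simp
  have EM: "\<And>b. b \<in> E \<Longrightarrow> b \<notin> M" using E(1) by blast
  have FJ: "\<And>b. b \<in> E \<Longrightarrow> h b \<notin> J" using hE F(1) by blast
  have inj: "inj_on g (M \<union> E)"
  proof (rule inj_onI)
    fix x y assume x: "x \<in> M \<union> E" and y: "y \<in> M \<union> E" and eq: "g x = g y"
    show "x = y"
    proof (cases "x \<in> M")
      case True
      show ?thesis
      proof (cases "y \<in> M")
        case True
        then have "inv_into J f x = inv_into J f y" using \<open>x \<in> M\<close> eq gM by simp
        then show ?thesis using \<open>x \<in> M\<close> True unfolding M_def by (metis f_inv_into_f)
      next
        case False
        then have "y \<in> E" using y by auto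
        then have "g y = Some (h y)" using gE False by blast
        moreover have "g x = Some (inv_into J f x)" using gM True by blast
        ultimately show ?thesis using eq invJ[OF True] FJ[OF \<open>y \<in> E\<close>] by simp
      qed
    next
      case False
      then have xE: "x \<in> E" using x by auto
      show ?thesis
      proof (cases "y \<in> M")
        case True
        have "g x = Some (h x)" using gE False xE by blast
        moreover have "g y = Some (inv_into J f y)" using gM True by blast
        ultimately show ?thesis using eq invJ[OF True] FJ[OF xE] by simp
      next
        case yM: False
        then have yE: "y \<in> E" using y by auto
        have "h x = h y" using eq gE[OF False xE] gE[OF yM yE] by simp
        then show ?thesis using xE yE h unfolding bij_betw_def inj_on_def by blast
      qed
    qed
  qed
  have labk: "\<forall>b\<in>I. \<forall>j. g b = Some j \<longrightarrow> j < k"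
  proof (intro ballI allI impI)
    fix b j assume "b \<in> I" "g b = Some j"
    show "j < k"
    proof (cases "b \<in> M")
      case True
      then show ?thesis using gM[OF True] invJ[OF True] Jk \<open>g b = Some j\<close> by auto
    next
      case False
      show ?thesis
      proof (cases "b \<in> E")
        case True
        then show ?thesis using gE[OF False True] hE[OF True] F(1) \<open>g b = Some j\<close> by auto
      next
        case False2: False
        then show ?thesis using gN[OF False False2] \<open>g b = Some j\<close> by simp
      qed
    qed
  qed
  have cov: "\<forall>j\<in>J. \<exists>b\<in>I. g b = Some j \<and> tau b \<le> D j"
  proof
    fix j assume j: "j \<in> J"
    have "f j \<in> M" unfolding M_def using j by simp
    then have "g (f j) = Some j" using gM f(1) j by (simp add: inv_into_f_f)
    then show "\<exists>b\<in>I. g b = Some j \<and> tau b \<le> D j" using f(2,3) j by blast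
  qed
  show ?thesis
  proof (intro exI[of _ g] conjI)
    show "\<forall>b\<in>I. \<forall>j. g b = Some j \<longrightarrow> j < k" by (rule labk)
    show "inj_on g {b\<in>I. g b \<noteq> None}" unfolding lab by (rule inj)
    show "card {b\<in>I. g b \<noteq> None} = min k (card I)" by (rule card)
    show "\<forall>j\<in>J. \<exists>b\<in>I. g b = Some j \<and> tau b \<le> D j" by (rule cov)
  qed
qed



lemma core:
  fixes V :: "'v set" and A :: "'e set" and tail head :: "'e \<Rightarrow> 'v" and tau :: "'e \<Rightarrow> nat"
  assumes "finite V" "finite A" "s \<notin> V"
    "\<forall>a\<in>A. (tail a \<in> V \<or> tail a = s) \<and> head a \<in> V"
    "wf {(tail a, head a) | a. a \<in> A \<and> tail a \<noteq> s}"
    "\<forall>i. \<forall>v\<in>V. min k (card (rho head tau A i v)) \<ge> min k (card (delta tail tau A i v))"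
  shows "\<exists>L::'e \<Rightarrow> nat option. (\<forall>a\<in>A. \<forall>j. L a = Some j \<longrightarrow> j < k) \<and>
     (\<forall>v\<in>V. inj_on L {a\<in>A. head a = v \<and> L a \<noteq> None} \<and>
            card {a\<in>A. head a = v \<and> L a \<noteq> None} = min k (card {a\<in>A. head a = v})) \<and>
     (\<forall>a\<in>A. \<forall>j. L a = Some j \<longrightarrow> tail a \<noteq> s \<longrightarrow> (\<exists>b\<in>A. head b = tail a \<and> L b = Some j \<and> tau b \<le> tau a))"
  using assms
proof (induction "card V" arbitrary: V A tail rule: less_induct)
  case (less V A tail)
  show ?case
  proof (cases "V = {}")
    case True
    then have "A = {}" using less.prems(4) by auto
    then show ?thesis by (intro exI[of _ "\<lambda>_. None"]) auto
  next
    case False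
    let ?R = "{(tail a, head a) | a. a \<in> A \<and> tail a \<noteq> s}"
    obtain w where w: "w \<in> V" "\<forall>y. (y, w) \<in> ?R \<longrightarrow> y \<notin> V"
    proof -
      obtain x where "x \<in> V" using False by blast
      then show ?thesis using wf_eq_minimal[THEN iffD1, OF less.prems(5), rule_format, of x V] that by blast
    qed
    have win: "\<forall>a\<in>A. head a = w \<longrightarrow> tail a = s"
    proof (intro ballI impI)
      fix a assume a: "a \<in> A" "head a = w"
      show "tail a = s"
      proof (rule ccontr)
        assume "tail a \<noteq> s"
        then have "(tail a, w) \<in> ?R" using a by blast
        then have "tail a \<notin> V" using w(2) by blast
        then show False using less.prems(4) a(1) \<open>tail a \<noteq> s\<close> by blast
      qed
    qed
    have ws: "w \<noteq> s" using w(1) less.prems(3) by blast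
    define V' where "V' = V - {w}"
    define A' where "A' = {a\<in>A. head a \<noteq> w}"
    define tail' where "tail' = (\<lambda>a. if tail a = w then s else tail a)"
    have cV: "card V' < card V" unfolding V'_def using w(1) less.prems(1) by (meson card_Diff1_less)
    have p1: "finite V'" "finite A'" "s \<notin> V'" unfolding V'_def A'_def using less.prems(1,2,3) by auto
    have p4: "\<forall>a\<in>A'. (tail' a \<in> V' \<or> tail' a = s) \<and> head a \<in> V'"
      unfolding V'_def A'_def tail'_def using less.prems(4) by auto
    have p5: "wf {(tail' a, head a) | a. a \<in> A' \<and> tail' a \<noteq> s}"
    proof (rule wf_subset[OF less.prems(5)])
      show "{(tail' a, head a) | a. a \<in> A' \<and> tail' a \<noteq> s} \<subseteq> ?R"
        unfolding A'_def tail'_def by (auto split: if_splits)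
    qed
    have fd: "\<And>i v. finite (delta tail tau A i v)" unfolding delta_def using less.prems(2) by simp
    have p6: "\<forall>i. \<forall>v\<in>V'. min k (card (rho head tau A' i v)) \<ge> min k (card (delta tail' tau A' i v))"
    proof (intro allI ballI)
      fix i v assume v: "v \<in> V'"
      have vV: "v \<in> V" "v \<noteq> w" "v \<noteq> s" using v less.prems(3) unfolding V'_def by auto
      have r: "rho head tau A' i v = rho head tau A i v" unfolding rho_def A'_def using vV by auto
      have d: "delta tail' tau A' i v \<subseteq> delta tail tau A i v"
        unfolding delta_def A'_def tail'_def using vV by (auto split: if_splits)
      have "card (delta tail' tau A' i v) \<le> card (delta tail tau A i v)" using card_mono[OF fd d] .
      then have "min k (card (delta tail' tau A' i v)) \<le> min k (card (delta tail tau A i v))" by simp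
      also have "\<dots> \<le> min k (card (rho head tau A i v))" using less.prems(6) vV(1) by blast
      finally show "min k (card (rho head tau A' i v)) \<ge> min k (card (delta tail' tau A' i v))" using r by simp
    qed
    obtain L' where L':
      "\<forall>a\<in>A'. \<forall>j. L' a = Some j \<longrightarrow> j < k"
      "\<forall>v\<in>V'. inj_on L' {a\<in>A'. head a = v \<and> L' a \<noteq> None} \<and>
            card {a\<in>A'. head a = v \<and> L' a \<noteq> None} = min k (card {a\<in>A'. head a = v})"
      "\<forall>a\<in>A'. \<forall>j. L' a = Some j \<longrightarrow> tail' a \<noteq> s \<longrightarrow> (\<exists>b\<in>A'. head b = tail' a \<and> L' b = Some j \<and> tau b \<le> tau a)"
      using less.hyps[OF cV p1 p4 p5 p6] by blast
    define I where "I = {a\<in>A. head a = w}"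
    define Sj where "Sj = (\<lambda>j. {a\<in>A. tail a = w \<and> L' a = Some j})"
    define J where "J = {j. Sj j \<noteq> {}}"
    define D where "D = (\<lambda>j. Min (tau ` Sj j))"
    have outA': "\<And>a. a \<in> A \<Longrightarrow> tail a = w \<Longrightarrow> a \<in> A'"
      unfolding A'_def using win ws by auto
    have fI: "finite I" unfolding I_def using less.prems(2) by simp
    have fS: "\<And>j. finite (Sj j)" unfolding Sj_def using less.prems(2) by simp
    have Jk: "J \<subseteq> {..<k}"
    proof
      fix j assume "j \<in> J"
      then obtain a where "a \<in> A" "tail a = w" "L' a = Some j" unfolding J_def Sj_def by auto
      then show "j \<in> {..<k}" using L'(1) outA' by auto
    qed
    have cond: "\<forall>i. card {j\<in>J. D j \<le> i} \<le> min k (card {b\<in>I. tau b \<le> i})"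
    proof
      fix i
      have sub: "{j\<in>J. D j \<le> i} \<subseteq> (\<lambda>a. the (L' a)) ` delta tail tau A i w"
      proof
        fix j assume j: "j \<in> {j\<in>J. D j \<le> i}"
        then have ne: "Sj j \<noteq> {}" unfolding J_def by simp
        have "D j \<in> tau ` Sj j" unfolding D_def using ne fS by (intro Min_in) auto
        then obtain a where a: "a \<in> Sj j" "tau a = D j" by auto
        then have "a \<in> delta tail tau A i w" using j unfolding Sj_def delta_def by auto
        moreover have "the (L' a) = j" using a(1) unfolding Sj_def by simp
        ultimately show "j \<in> (\<lambda>a. the (L' a)) ` delta tail tau A i w" by force
      qed
      have "card {j\<in>J. D j \<le> i} \<le> card ((\<lambda>a. the (L' a)) ` delta tail tau A i w)"
        using card_mono[OF finite_imageI[OF fd] sub] .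
      also have "\<dots> \<le> card (delta tail tau A i w)" by (rule card_image_le[OF fd])
      finally have c1: "card {j\<in>J. D j \<le> i} \<le> card (delta tail tau A i w)" .
      have c2: "card {j\<in>J. D j \<le> i} \<le> k"
      proof -
        have "{j\<in>J. D j \<le> i} \<subseteq> {..<k}" using Jk by auto
        then show ?thesis by (metis card_lessThan card_mono finite_lessThan)
      qed
      have "card {j\<in>J. D j \<le> i} \<le> min k (card (delta tail tau A i w))" using c1 c2 by simp
      also have "\<dots> \<le> min k (card (rho head tau A i w))" using less.prems(6) w(1) by blast
      also have "rho head tau A i w = {b\<in>I. tau b \<le> i}" unfolding rho_def I_def by auto
      finally show "card {j\<in>J. D j \<le> i} \<le> min k (card {b\<in>I. tau b \<le> i})" .
    qed
    obtain g where g: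
      "\<forall>b\<in>I. \<forall>j. g b = Some j \<longrightarrow> j < k"
      "inj_on g {b\<in>I. g b \<noteq> None}" "card {b\<in>I. g b \<noteq> None} = min k (card I)"
      "\<forall>j\<in>J. \<exists>b\<in>I. g b = Some j \<and> tau b \<le> D j"
      using assignB[OF fI Jk cond] by blast
    define L where "L = (\<lambda>a. if head a = w then g a else L' a)"
    have P1: "\<forall>a\<in>A. \<forall>j. L a = Some j \<longrightarrow> j < k"
      using g(1) L'(1) unfolding L_def I_def A'_def by auto
    have P2: "\<forall>v\<in>V. inj_on L {a\<in>A. head a = v \<and> L a \<noteq> None} \<and>
            card {a\<in>A. head a = v \<and> L a \<noteq> None} = min k (card {a\<in>A. head a = v})"
    proof
      fix v assume v: "v \<in> V"
      show "inj_on L {a\<in>A. head a = v \<and> L a \<noteq> None} \<and>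
            card {a\<in>A. head a = v \<and> L a \<noteq> None} = min k (card {a\<in>A. head a = v})"
      proof (cases "v = w")
        case True
        have e: "{a\<in>A. head a = v \<and> L a \<noteq> None} = {b\<in>I. g b \<noteq> None}"
          unfolding I_def L_def using True by auto
        have "inj_on L {b\<in>I. g b \<noteq> None}"
          using g(2) by (rule inj_on_cong[THEN iffD1, rotated]) (simp add: L_def I_def)
        then show ?thesis using e g(3) True unfolding I_def by simp
      next
        case False
        then have vV': "v \<in> V'" using v unfolding V'_def by simp
        have e: "{a\<in>A. head a = v \<and> L a \<noteq> None} = {a\<in>A'. head a = v \<and> L' a \<noteq> None}"
          unfolding A'_def L_def using False by auto
        have e2: "{a\<in>A. head a = v} = {a\<in>A'. head a = v}" unfolding A'_def using False by auto
        have "inj_on L' {a\<in>A'. head a = v \<and> L' a \<noteq> None}" using L'(2) vV' by blast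
        then have "inj_on L {a\<in>A'. head a = v \<and> L' a \<noteq> None}"
          by (rule inj_on_cong[THEN iffD1, rotated]) (use False in \<open>auto simp: L_def A'_def\<close>)
        then show ?thesis using e e2 L'(2) vV' by simp
      qed
    qed
    have P3: "\<forall>a\<in>A. \<forall>j. L a = Some j \<longrightarrow> tail a \<noteq> s \<longrightarrow> (\<exists>b\<in>A. head b = tail a \<and> L b = Some j \<and> tau b \<le> tau a)"
    proof (intro ballI allI impI)
      fix a j assume a: "a \<in> A" and La: "L a = Some j" and ta: "tail a \<noteq> s"
      have hw: "head a \<noteq> w" using win a ta by blast
      then have aA': "a \<in> A'" and L'a: "L' a = Some j" using a La unfolding A'_def L_def by auto
      show "\<exists>b\<in>A. head b = tail a \<and> L b = Some j \<and> tau b \<le> tau a"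
      proof (cases "tail a = w")
        case True
        have "a \<in> Sj j" unfolding Sj_def using a True L'a by simp
        then have jJ: "j \<in> J" unfolding J_def by auto
        have Dj: "D j \<le> tau a" unfolding D_def using \<open>a \<in> Sj j\<close> fS by simp
        obtain b where b: "b \<in> I" "g b = Some j" "tau b \<le> D j" using g(4) jJ by blast
        have "b \<in> A" "head b = w" using b(1) unfolding I_def by auto
        moreover have "L b = Some j" using b(2) \<open>head b = w\<close> unfolding L_def by simp
        ultimately show ?thesis using True b(3) Dj by auto
      next
        case False
        then have "tail' a = tail a" unfolding tail'_def by simp
        then obtain b where b: "b \<in> A'" "head b = tail a" "L' b = Some j" "tau b \<le> tau a"
          using L'(3) aA' L'a ta by metis
        have "head b \<noteq> w" using b(1) unfolding A'_def by simp
        then have "L b = Some j" using b(3) unfolding L_def by simp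
        moreover have "b \<in> A" using b(1) unfolding A'_def by simp
        ultimately show ?thesis using b by auto
      qed
    qed
    show ?thesis using P1 P2 P3 by blast
  qed
qed



theorem theorem2:
  fixes V :: "'v set" and s :: 'v and A :: "'e set"
    and tail head :: "'e \<Rightarrow> 'v" and tau :: "'e \<Rightarrow> nat" and k :: nat
  assumes "temporal_network V s A tail head"
    and "acyclic_arcs tail head A"
    and "\<forall>i::nat. \<forall>v\<in>V. min k (card (rho head tau A i v)) \<ge> min k (card (delta tail tau A i v))"
  shows "\<exists>T :: nat \<Rightarrow> 'v set \<times> 'e set.
           (\<forall>j<k. tau_respecting_arborescence V s A tail head tau (fst (T j)) (snd (T j))) \<and>
           (\<forall>j<k. \<forall>l<k. j \<noteq> l \<longrightarrow> snd (T j) \<inter> snd (T l) = {}) \<and>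
           (\<forall>v\<in>V. card {j. j < k \<and> v \<in> fst (T j)} = min k (indeg head A v))"
proof -
  have fV: "finite V" and fA: "finite A" and sV: "s \<notin> V"
    and ends: "\<forall>a\<in>A. tail a \<in> V \<union> {s} \<and> head a \<in> V \<union> {s}" and hs: "\<forall>a\<in>A. head a \<noteq> s"
    using assms(1) unfolding temporal_network_def by auto
  have p4: "\<forall>a\<in>A. (tail a \<in> V \<or> tail a = s) \<and> head a \<in> V" using ends hs by blast
  have arA: "arc_rel tail head A = (\<lambda>a. (tail a, head a)) ` A" unfolding arc_rel_def by auto
  have fr: "finite (arc_rel tail head A)" unfolding arA using fA by simp
  have ac: "acyclic (arc_rel tail head A)" using assms(2) unfolding acyclic_arcs_def .
  have "wf (((arc_rel tail head A)\<inverse>)\<inverse>)"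
    by (rule finite_acyclic_wf) (use fr ac in \<open>auto simp: acyclic_converse\<close>)
  then have wfA: "wf (arc_rel tail head A)" by simp
  have wfR: "wf {(tail a, head a) | a. a \<in> A \<and> tail a \<noteq> s}"
    by (rule wf_subset[OF wfA]) (auto simp: arc_rel_def)
  obtain L :: "'e \<Rightarrow> nat option" where L:
     "\<forall>a\<in>A. \<forall>j. L a = Some j \<longrightarrow> j < k"
     "\<forall>v\<in>V. inj_on L {a\<in>A. head a = v \<and> L a \<noteq> None} \<and>
            card {a\<in>A. head a = v \<and> L a \<noteq> None} = min k (card {a\<in>A. head a = v})"
     "\<forall>a\<in>A. \<forall>j. L a = Some j \<longrightarrow> tail a \<noteq> s \<longrightarrow> (\<exists>b\<in>A. head b = tail a \<and> L b = Some j \<and> tau b \<le> tau a)"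
    using core[OF fV fA sV p4 wfR assms(3)] by blast
  have uniq: "\<And>a b j. a \<in> A \<Longrightarrow> b \<in> A \<Longrightarrow> head a = head b \<Longrightarrow> L a = Some j \<Longrightarrow> L b = Some j \<Longrightarrow> a = b"
  proof -
    fix a b j assume a: "a \<in> A" and b: "b \<in> A" and h: "head a = head b" and La: "L a = Some j" and Lb: "L b = Some j"
    have "head a \<in> V" using p4 a by blast
    then have "inj_on L {c\<in>A. head c = head a \<and> L c \<noteq> None}" using L(2) by blast
    then show "a = b" using a b h La Lb unfolding inj_on_def by force
  qed
  define T where "T = (\<lambda>j. ({head a | a. a \<in> A \<and> L a = Some j}, {a\<in>A. L a = Some j}))"
  have arb: "tau_respecting_arborescence V s A tail head tau (fst (T j)) (snd (T j))" if jk: "j < k" for j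
  proof -
    let ?V' = "{head a | a. a \<in> A \<and> L a = Some j}"
    let ?B = "{a\<in>A. L a = Some j}"
    have s1: "?V' \<subseteq> V" using p4 by blast
    have s2: "?B \<subseteq> A" by blast
    have s3: "\<forall>a\<in>?B. tail a \<in> ?V' \<union> {s} \<and> head a \<in> ?V' \<union> {s}"
    proof
      fix a assume a: "a \<in> ?B"
      have "tail a \<in> ?V' \<union> {s}"
      proof (cases "tail a = s")
        case False
        then obtain b where "b \<in> A" "head b = tail a" "L b = Some j" using L(3) a by blast
        then show ?thesis by (metis (mono_tags, lifting) UnI1 mem_Collect_eq)
      qed simp
      moreover have "head a \<in> ?V'" using a by blast
      ultimately show "tail a \<in> ?V' \<union> {s} \<and> head a \<in> ?V' \<union> {s}" by blast
    qed
    have s4: "acyclic_arcs tail head ?B"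
      unfolding acyclic_arcs_def by (rule acyclic_subset[OF ac]) (auto simp: arc_rel_def)
    have s5: "\<forall>v\<in>?V'. card (in_arcs head ?B v) = 1"
    proof
      fix v assume "v \<in> ?V'"
      then obtain a0 where a0: "a0 \<in> A" "L a0 = Some j" "head a0 = v" by blast
      have "in_arcs head ?B v = {a0}" unfolding in_arcs_def using a0 uniq by blast
      then show "card (in_arcs head ?B v) = 1" by simp
    qed
    have s6: "\<forall>v \<in> ?V' \<union> {s}. \<forall>p. is_path tail head ?B s v p \<longrightarrow> tau_respecting_path tau p"
    proof (intro ballI allI impI)
      fix v p assume "is_path tail head ?B s v p"
      then have pB: "set p \<subseteq> ?B" and cons: "\<forall>m. Suc m < length p \<longrightarrow> head (p ! m) = tail (p ! Suc m)"
        and dis: "distinct (s # map head p)" unfolding is_path_def by auto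
      show "tau_respecting_path tau p" unfolding tau_respecting_path_def sorted_iff_nth_Suc
      proof (intro allI impI)
        fix m assume m: "Suc m < length (map tau p)"
        then have m': "Suc m < length p" by simp
        have pm: "p ! m \<in> ?B" using pB m' by (meson Suc_lessD nth_mem subsetD)
        have pm1: "p ! Suc m \<in> ?B" using pB m' by (meson nth_mem subsetD)
        have "head (p ! m) \<noteq> s" using dis m' by (metis Suc_lessD distinct.simps(2) length_map nth_map nth_mem)
        then have ts: "tail (p ! Suc m) \<noteq> s" using cons m' by simp
        then obtain b where b: "b \<in> A" "head b = tail (p ! Suc m)" "L b = Some j" "tau b \<le> tau (p ! Suc m)"
          using L(3) pm1 by blast
        have "b = p ! m" using uniq[of b "p ! m" j] b pm cons m' by simp
        then show "map tau p ! m \<le> map tau p ! Suc m" using b(4) m' by simp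
      qed
    qed
    show ?thesis unfolding T_def tau_respecting_arborescence_def s_arborescence_def fst_conv snd_conv
      using s1 s2 s3 s4 s5 s6 by blast
  qed
  have disj: "\<forall>j<k. \<forall>l<k. j \<noteq> l \<longrightarrow> snd (T j) \<inter> snd (T l) = {}" unfolding T_def by auto
  have cnt: "card {j. j < k \<and> v \<in> fst (T j)} = min k (indeg head A v)" if v: "v \<in> V" for v
  proof -
    let ?S = "{a\<in>A. head a = v \<and> L a \<noteq> None}"
    have e: "{j. j < k \<and> v \<in> fst (T j)} = (\<lambda>a. the (L a)) ` ?S"
    proof
      show "{j. j < k \<and> v \<in> fst (T j)} \<subseteq> (\<lambda>a. the (L a)) ` ?S"
      proof
        fix j assume "j \<in> {j. j < k \<and> v \<in> fst (T j)}"
        then obtain a where "a \<in> A" "head a = v" "L a = Some j" unfolding T_def by auto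
        then show "j \<in> (\<lambda>a. the (L a)) ` ?S" by (intro image_eqI[where x=a]) auto
      qed
      show "(\<lambda>a. the (L a)) ` ?S \<subseteq> {j. j < k \<and> v \<in> fst (T j)}"
      proof
        fix j assume "j \<in> (\<lambda>a. the (L a)) ` ?S"
        then obtain a where a0: "a \<in> ?S" "j = the (L a)" by blast
        then have a: "a \<in> A" "head a = v" "L a \<noteq> None" by auto
        then have La: "L a = Some j" using a0(2) by auto
        then have "j < k" using L(1) a(1) by blast
        moreover have "v \<in> fst (T j)" unfolding T_def fst_conv using a(1,2) La by blast
        ultimately show "j \<in> {j. j < k \<and> v \<in> fst (T j)}" by simp
      qed
    qed
    have inj: "inj_on (\<lambda>a. the (L a)) ?S"
    proof (rule inj_onI)
      fix a b assume a: "a \<in> ?S" and b: "b \<in> ?S" and eq: "the (L a) = the (L b)"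
      then have "L a = L b" by auto
      moreover have "inj_on L ?S" using L(2) v by blast
      ultimately show "a = b" using a b by (meson inj_onD)
    qed
    have "card {j. j < k \<and> v \<in> fst (T j)} = card ?S" unfolding e using inj by (rule card_image)
    also have "\<dots> = min k (card {a\<in>A. head a = v})" using L(2) v by blast
    also have "\<dots> = min k (indeg head A v)" unfolding indeg_def in_arcs_def by simp
    finally show ?thesis .
  qed
  show ?thesis using arb disj cnt by blast
qed

end
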